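(* For $0\le p\le 1$ let $|\Psi_s\rangle=\cos\frac{\pi}{8}|000\rangle+\sin\frac{\pi}{8}|111\rangle$ and $$\rho_\chi(p,\pi/8)=p|\Psi_s\rangle\langle\Psi_s|+(1-p)\,|00\rangle\langle00|\otimes\tfrac{I_2}{2}.$$ Then the $3\times 9$ matrix $M$ with entries $M_{j,ik}=\mathrm{tr}[\rho_\chi(p,\pi/8)(\sigma_i\otimes\sigma_j\otimes\sigma_k)]$ has singular values $p,p,\frac{\sqrt2}{2}p$, and the maximal value of $|\mathrm{tr}(\mathcal{S}\rho_\chi(p,\pi/8))|$ over all Svetlichny operators $\mathcal{S}$ equals $4p$. In particular $\rho_\chi(p,\pi/8)$ does not violate the Svetlichny inequality for any $p\in[0,1]$.
   Context: $\sigma_1,\sigma_2,\sigma_3$ are the Pauli matrices, $I_2$ the $2\times2$ identity. For real unit vectors $\vec a,\vec a',\vec b,\vec b',\vec c,\vec c'\in\mathbb{R}^3$ let $A=\vec a\cdot\vec\sigma=\sum_k a_k\sigma_k$, and similarly $A',B,B',C,C'$. The Svetlichny operator is $$\mathcal{S}=A\otimes[(B+B')\otimes C+(B-B')\otimes C']+A'\otimes[(B-B')\otimes C-(B+B')\otimes C'],$$ and maxima are over all choices of the six unit vectors. A state violates the Svetlichny inequality if $|\mathrm{tr}(\mathcal{S}\rho)|>4$ for some such choice. *)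

theory Defs
  imports "Jordan_Normal_Form.Jordan_Normal_Form" "Jordan_Normal_Form.Schur_Decomposition"
begin

definition mtrace :: "'a::comm_ring_1 mat \<Rightarrow> 'a" where
  "mtrace A = (\<Sum>i<dim_row A. A $$ (i, i))"

(* Kronecker (tensor) product; index i of A \<otimes> B corresponds to (i div dim B, i mod dim B),
   i.e. the standard ordering |abc> = index 4a+2b+c *)
definition kron :: "'a::times mat \<Rightarrow> 'a mat \<Rightarrow> 'a mat" where
  "kron A B = mat (dim_row A * dim_row B) (dim_col A * dim_col B)
     (\<lambda>(i, j). A $$ (i div dim_row B, j div dim_col B) * B $$ (i mod dim_row B, j mod dim_col B))"

(* Pauli matrices: pauli 0 = \<sigma>_1, pauli 1 = \<sigma>_2, pauli 2 = \<sigma>_3 *)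
definition pauli :: "nat \<Rightarrow> complex mat" where
  "pauli k = (if k = 0 then mat_of_rows_list 2 [[0, 1], [1, 0]]
              else if k = 1 then mat_of_rows_list 2 [[0, -\<i>], [\<i>, 0]]
              else mat_of_rows_list 2 [[1, 0], [0, -1]])"

definition unit3 :: "real vec \<Rightarrow> bool" where
  "unit3 a \<longleftrightarrow> dim_vec a = 3 \<and> a \<bullet> a = 1"

definition sdot :: "real vec \<Rightarrow> complex mat" where
  "sdot a = complex_of_real (a $ 0) \<cdot>\<^sub>m pauli 0 + complex_of_real (a $ 1) \<cdot>\<^sub>m pauli 1
           + complex_of_real (a $ 2) \<cdot>\<^sub>m pauli 2"

definition svetlichny ::
  "real vec \<Rightarrow> real vec \<Rightarrow> real vec \<Rightarrow> real vec \<Rightarrow> real vec \<Rightarrow> real vec \<Rightarrow> complex mat" where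
  "svetlichny a a' b b' c c' =
    (let A = sdot a; A' = sdot a'; B = sdot b; B' = sdot b'; C = sdot c; C' = sdot c' in
      kron A (kron (B + B') C + kron (B - B') C')
    + kron A' (kron (B - B') C - kron (B + B') C'))"

definition svet_values :: "complex mat \<Rightarrow> real set" where
  "svet_values \<rho> = {cmod (mtrace (svetlichny a a' b b' c c' * \<rho>)) | a a' b b' c c'.
      unit3 a \<and> unit3 a' \<and> unit3 b \<and> unit3 b' \<and> unit3 c \<and> unit3 c'}"

definition ket0 :: "complex mat" where "ket0 = mat_of_cols_list 2 [[1, 0]]"
definition ket1 :: "complex mat" where "ket1 = mat_of_cols_list 2 [[0, 1]]"

definition psi_s :: "complex mat" where
  "psi_s = complex_of_real (cos (pi / 8)) \<cdot>\<^sub>m kron ket0 (kron ket0 ket0)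
         + complex_of_real (sin (pi / 8)) \<cdot>\<^sub>m kron ket1 (kron ket1 ket1)"

definition rho_chi :: "real \<Rightarrow> complex mat" where
  "rho_chi p = complex_of_real p \<cdot>\<^sub>m (psi_s * mat_adjoint psi_s)
     + complex_of_real (1 - p) \<cdot>\<^sub>m
         kron (kron ket0 ket0 * mat_adjoint (kron ket0 ket0)) ((1 / 2) \<cdot>\<^sub>m 1\<^sub>m 2)"

(* the 3x9 correlation matrix M_{j,ik} = tr[\<rho> (\<sigma>_i \<otimes> \<sigma>_j \<otimes> \<sigma>_k)];
   row j, column 3*i+k (the trace is real since \<rho> and the Pauli products are Hermitian) *)
definition corr_mat :: "complex mat \<Rightarrow> real mat" where
  "corr_mat \<rho> = mat 3 9 (\<lambda>(j, c).
      Re (mtrace (\<rho> * kron (pauli (c div 3)) (kron (pauli j) (pauli (c mod 3))))))"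

(* singular values (with multiplicity) of an m x n real matrix with m \<le> n:
   the nonnegative numbers whose squares are the eigenvalues of M M^T, counted with
   algebraic multiplicity *)
definition singular_values :: "real mat \<Rightarrow> real list \<Rightarrow> bool" where
  "singular_values M ss \<longleftrightarrow> length ss = dim_row M \<and> (\<forall>s\<in>set ss. 0 \<le> s) \<and>
     char_poly (M * transpose_mat M) = (\<Prod>s\<leftarrow>ss. [:- (s ^ 2), 1:])"

end

theory Submission imports Defs begin

lemma ket0[simp]: "dim_row ket0 = 2" "dim_col ket0 = 1" "ket0 $$ (0,0) = 1" "ket0 $$ (Suc 0,0) = 0"
  by (simp_all add: ket0_def mat_of_cols_list_def)
lemma ket1[simp]: "dim_row ket1 = 2" "dim_col ket1 = 1" "ket1 $$ (0,0) = 0" "ket1 $$ (Suc 0,0) = 1"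
  by (simp_all add: ket1_def mat_of_cols_list_def)
lemma kron_dim[simp]: "dim_row (kron A B) = dim_row A * dim_row B" "dim_col (kron A B) = dim_col A * dim_col B"
  by (simp_all add: kron_def)
lemma kron_idx[simp]: "i < dim_row A * dim_row B \<Longrightarrow> j < dim_col A * dim_col B \<Longrightarrow>
  kron A B $$ (i,j) = A $$ (i div dim_row B, j div dim_col B) * B $$ (i mod dim_row B, j mod dim_col B)"
  by (simp add: kron_def)

lemma adj_dim[simp]: "dim_row (mat_adjoint A) = dim_col A" "dim_col (mat_adjoint A) = dim_row A"
  by (simp_all add: mat_adjoint_def)
lemma adj_idx[simp]: "i < dim_col A \<Longrightarrow> j < dim_row A \<Longrightarrow> mat_adjoint A $$ (i,j) = cnj (A $$ (j,i))"
  by (simp add: mat_adjoint_def mat_of_rows_index)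

definition rr :: "real \<Rightarrow> nat \<Rightarrow> nat \<Rightarrow> complex" where
 "rr p i j = (if i = 0 \<and> j = 0 then complex_of_real (p * cos (pi/8)^2 + (1-p)/2)
   else if i = 1 \<and> j = 1 then complex_of_real ((1-p)/2)
   else if (i = 0 \<and> j = 7) \<or> (i = 7 \<and> j = 0) then complex_of_real (p * cos (pi/8) * sin (pi/8))
   else if i = 7 \<and> j = 7 then complex_of_real (p * sin (pi/8)^2) else 0)"

lemma psi_dim[simp]: "dim_row psi_s = 8" "dim_col psi_s = 1" by (simp_all add: psi_s_def)

lemma psi_idx: "i < 8 \<Longrightarrow> psi_s $$ (i,0) = (if i = 0 then complex_of_real (cos (pi/8)) else if i = 7 then complex_of_real (sin (pi/8)) else 0)"
proof -
  assume "i < 8"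
  then consider "i=0"|"i=1"|"i=2"|"i=3"|"i=4"|"i=5"|"i=6"|"i=7" by linarith
  then show ?thesis by cases (simp_all add: psi_s_def)
qed

lemma dims[simp]: "dim_row (rho_chi p) = 8" "dim_col (rho_chi p) = 8"
  by (simp_all add: rho_chi_def mat_adjoint_def)

lemma rho_idx: "i < 8 \<Longrightarrow> j < 8 \<Longrightarrow> rho_chi p $$ (i,j) = rr p i j"
proof -
  assume "i < 8" "j < 8"
  then consider "i=0"|"i=1"|"i=2"|"i=3"|"i=4"|"i=5"|"i=6"|"i=7" by linarith
  note c = this
  from \<open>j<8\<close> consider "j=0"|"j=1"|"j=2"|"j=3"|"j=4"|"j=5"|"j=6"|"j=7" by linarith
  note d = this
  show ?thesis
    apply (rule c; rule d)
    apply (simp_all add: rho_chi_def rr_def psi_idx index_mult_mat scalar_prod_def power2_eq_square)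
    done
qed

lemma sum8: "(\<Sum>i<(8::nat). f i) = f 0 + f 1 + f 2 + f 3 + f 4 + f 5 + f 6 + (f 7 :: 'a::comm_monoid_add)"
  by (simp add: lessThan_Suc eval_nat_numeral add_ac)
lemma sum8': "(\<Sum>i=0..<(8::nat). f i) = f 0 + f 1 + f 2 + f 3 + f 4 + f 5 + f 6 + (f 7 :: 'a::comm_monoid_add)"
  using sum8 atLeast0LessThan by metis

lemma tr_X: assumes "dim_row X = 8" "dim_col X = 8"
  shows "mtrace (X * rho_chi p) = X $$ (0,0) * rr p 0 0 + X $$ (1,1) * rr p 1 1 + X $$ (0,7) * rr p 7 0
     + X $$ (7,0) * rr p 0 7 + X $$ (7,7) * rr p 7 7"
  using assms
  apply (simp add: mtrace_def index_mult_mat scalar_prod_def sum8 sum8' rho_idx)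
  apply (simp add: rr_def)
  done

lemma tr_X': assumes "dim_row X = 8" "dim_col X = 8"
  shows "mtrace (rho_chi p * X) = X $$ (0,0) * rr p 0 0 + X $$ (1,1) * rr p 1 1 + X $$ (0,7) * rr p 7 0
     + X $$ (7,0) * rr p 0 7 + X $$ (7,7) * rr p 7 7"
  using assms
  apply (simp add: mtrace_def index_mult_mat scalar_prod_def sum8 sum8' rho_idx)
  apply (simp add: rr_def)
  done

lemma pauli_dim[simp]: "dim_row (pauli k) = 2" "dim_col (pauli k) = 2"
  by (simp_all add: pauli_def mat_of_rows_list_def)
lemma sdot_dim[simp]: "dim_row (sdot a) = 2" "dim_col (sdot a) = 2"
  by (simp_all add: sdot_def)
lemma sdot_idx[simp]:
  "sdot a $$ (0,0) = complex_of_real (a$2)"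
  "sdot a $$ (0,Suc 0) = complex_of_real (a$0) - \<i> * complex_of_real (a$1)"
  "sdot a $$ (Suc 0,0) = complex_of_real (a$0) + \<i> * complex_of_real (a$1)"
  "sdot a $$ (Suc 0,Suc 0) = - complex_of_real (a$2)"
  by (simp_all add: sdot_def pauli_def mat_of_rows_list_def)

definition zp :: "real vec \<Rightarrow> real vec \<Rightarrow> real vec \<Rightarrow> real" where
  "zp x y z = x$2*y$2*z$2"
definition rp :: "real vec \<Rightarrow> real vec \<Rightarrow> real vec \<Rightarrow> real" where
  "rp x y z = x$0*y$0*z$0 - x$0*y$1*z$1 - x$1*y$0*z$1 - x$1*y$1*z$0"
definition comb :: "(real vec \<Rightarrow> real vec \<Rightarrow> real vec \<Rightarrow> real) \<Rightarrow> real vec \<Rightarrow> real vec \<Rightarrow> real vec \<Rightarrow> real vec \<Rightarrow> real vec \<Rightarrow> real vec \<Rightarrow> real" where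
  "comb t a a' b b' c c' = t a b c + t a b' c + t a b c' - t a b' c' + t a' b c - t a' b' c - t a' b c' - t a' b' c'"

lemma S_dim[simp]: "dim_row (svetlichny a a' b b' c c') = 8" "dim_col (svetlichny a a' b b' c c') = 8"
  by (simp_all add: svetlichny_def Let_def)

lemma S00: "svetlichny a a' b b' c c' $$ (0,0) = complex_of_real (comb zp a a' b b' c c')"
  by (simp add: svetlichny_def Let_def comb_def zp_def algebra_simps)
lemma S11: "svetlichny a a' b b' c c' $$ (Suc 0,Suc 0) = - svetlichny a a' b b' c c' $$ (0,0)"
  by (simp add: svetlichny_def Let_def algebra_simps)
lemma S77: "svetlichny a a' b b' c c' $$ (7,7) = - svetlichny a a' b b' c c' $$ (0,0)"
  by (simp add: svetlichny_def Let_def algebra_simps)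
lemma S07: "svetlichny a a' b b' c c' $$ (0,7) + svetlichny a a' b b' c c' $$ (7,0) = complex_of_real (2 * comb rp a a' b b' c c')"
  by (simp add: svetlichny_def Let_def comb_def rp_def complex_eq_iff algebra_simps)

lemma cs1: "cos (pi/8)^2 - sin (pi/8)^2 = sqrt 2 / 2"
  using cos_double[of "pi/8"] cos_45 by simp
lemma cs2: "cos (pi/8) * sin (pi/8) = sqrt 2 / 4"
  using sin_double[of "pi/8"] sin_45 by (simp add: mult.commute)

lemma cs1': "cos (pi/8) * cos (pi/8) = sin (pi/8) * sin (pi/8) + sqrt 2 / 2"
  using cs1 by (simp add: power2_eq_square)

lemma tr_S: "mtrace (svetlichny a a' b b' c c' * rho_chi p) =
   complex_of_real (sqrt 2 / 2 * p * (comb zp a a' b b' c c' + comb rp a a' b b' c c'))"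
proof -
  let ?S = "svetlichny a a' b b' c c'"
  have "mtrace (?S * rho_chi p) = ?S $$ (0,0) * (rr p 0 0 - rr p 1 1 - rr p 7 7) + (?S $$ (0,7) + ?S $$ (7,0)) * rr p 0 7"
    by (simp add: tr_X S11 S77 algebra_simps rr_def)
  also have "rr p 0 0 - rr p 1 1 - rr p 7 7 = complex_of_real (p * (cos (pi/8)^2 - sin (pi/8)^2))"
    by (simp add: rr_def algebra_simps)
  also have "rr p 0 7 = complex_of_real (p * (cos (pi/8) * sin (pi/8)))"
    by (simp add: rr_def algebra_simps)
  finally show ?thesis
    by (simp only: S00 S07 cs1 cs2 of_real_mult[symmetric] of_real_add[symmetric]) (simp add: algebra_simps)
qed

lemma pauli_idx[simp]:
  "k < 3 \<Longrightarrow> pauli k $$ (0,0) = (if k = 2 then 1 else 0)"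
  "k < 3 \<Longrightarrow> pauli k $$ (Suc 0,Suc 0) = (if k = 2 then -1 else 0)"
  "k < 3 \<Longrightarrow> pauli k $$ (0,Suc 0) = (if k = 0 then 1 else if k = 1 then -\<i> else 0)"
  "k < 3 \<Longrightarrow> pauli k $$ (Suc 0,0) = (if k = 0 then 1 else if k = 1 then \<i> else 0)"
  by (auto simp: pauli_def mat_of_rows_list_def)

definition MM :: "real \<Rightarrow> real mat" where
  "MM p = mat 3 9 (\<lambda>(j,c). if j = 0 \<and> c = 0 then sqrt 2 / 2 * p else if j = 0 \<and> c = 4 then - (sqrt 2 / 2 * p)
     else if j = 1 \<and> (c = 1 \<or> c = 3) then - (sqrt 2 / 2 * p) else if j = 2 \<and> c = 8 then sqrt 2 / 2 * p else 0)"

lemma corr_eq: "corr_mat (rho_chi p) = MM p"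
proof (rule eq_matI)
  fix j c assume "j < dim_row (MM p)" "c < dim_col (MM p)"
  then have jc: "j < 3" "c < 9" by (auto simp: MM_def)
  have d: "c div 3 < 3" "c mod 3 < 3" using jc by auto
  have e: "corr_mat (rho_chi p) $$ (j,c) = Re (mtrace (rho_chi p * kron (pauli (c div 3)) (kron (pauli j) (pauli (c mod 3)))))"
    using jc by (simp add: corr_mat_def)
  from jc(1) consider "j=0"|"j=1"|"j=2" by linarith
  note cj = this
  from jc(2) consider "c=0"|"c=1"|"c=2"|"c=3"|"c=4"|"c=5"|"c=6"|"c=7"|"c=8" by linarith
  note cc = this
  show "corr_mat (rho_chi p) $$ (j,c) = MM p $$ (j,c)"
    unfolding e using jc
    apply (simp add: tr_X' rr_def)
    apply (rule cj; rule cc)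
    apply (simp_all add: MM_def cs2 power2_eq_square cs1' algebra_simps field_simps)
    done
qed (auto simp: corr_mat_def MM_def)

definition DD :: "real \<Rightarrow> real mat" where
  "DD p = mat 3 3 (\<lambda>(i,j). if i = j then (if i = 2 then p^2/2 else p^2) else 0)"

lemma sum9: "(\<Sum>i=0..<(9::nat). f i) = f 0 + f 1 + f 2 + f 3 + f 4 + f 5 + f 6 + f 7 + (f 8 :: 'a::comm_monoid_add)"
  by (simp add: atLeast0LessThan lessThan_Suc eval_nat_numeral add_ac)

lemma MMT: "MM p * transpose_mat (MM p) = DD p"
proof (rule eq_matI)
  fix i j assume "i < dim_row (DD p)" "j < dim_col (DD p)"
  then have ij: "i < 3" "j < 3" by (auto simp: DD_def)
  from ij(1) consider "i=0"|"i=1"|"i=2" by linarith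
  note ci = this
  from ij(2) consider "j=0"|"j=1"|"j=2" by linarith
  note cj = this
  show "(MM p * transpose_mat (MM p)) $$ (i,j) = DD p $$ (i,j)"
    using ij
    apply (simp add: index_mult_mat scalar_prod_def MM_def DD_def sum9)
    apply (rule ci; rule cj)
    apply (simp_all add: power2_eq_square algebra_simps)
    done
qed (auto simp: MM_def DD_def)

lemma sv: "singular_values (corr_mat (rho_chi p)) [p, p, sqrt 2 / 2 * p]" if "0 \<le> p"
proof -
  have c: "DD p \<in> carrier_mat 3 3" by (simp add: DD_def)
  have u: "upper_triangular (DD p)" by (auto simp: DD_def upper_triangular_def)
  have dm: "diag_mat (DD p) = [p^2, p^2, p^2/2]"
    by (simp add: diag_mat_def DD_def upt_rec)
  have h: "(sqrt 2 * p / 2)^2 = p^2/2" by (simp add: power_mult_distrib power_divide)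
  show ?thesis
    unfolding singular_values_def corr_eq MMT char_poly_upper_triangular[OF c u] dm
    using that by (simp add: MM_def h)
qed

lemma cs_ineq:
  fixes b0 b1 b2 v0 v1 v2 :: real
  assumes "b0^2 + b1^2 + b2^2 = 1"
  shows "\<bar>b0*v0 + b1*v1 + b2*v2\<bar> \<le> sqrt (v0^2+v1^2+v2^2)"
proof -
  have "(b0^2 + b1^2 + b2^2)*(v0^2+v1^2+v2^2) - (b0*v0 + b1*v1 + b2*v2)^2
     = (b0*v1-b1*v0)^2 + (b0*v2-b2*v0)^2 + (b1*v2-b2*v1)^2"
    by (simp add: power2_eq_square algebra_simps)
  moreover have "(b0*v1-b1*v0)^2 + (b0*v2-b2*v0)^2 + (b1*v2-b2*v1)^2 \<ge> 0" by simp
  ultimately have "0 \<le> (b0^2 + b1^2 + b2^2)*(v0^2+v1^2+v2^2) - (b0*v0 + b1*v1 + b2*v2)^2" by simp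
  then have "(b0*v0 + b1*v1 + b2*v2)^2 \<le> v0^2+v1^2+v2^2" using assms by simp
  then show ?thesis using real_le_rsqrt abs_le_square_iff
    by (metis real_sqrt_abs real_sqrt_le_mono)
qed

lemma L_ineq:
  fixes x00 x01 x02 x10 x11 x12 x20 x21 x22 :: real
  shows "(x00 - x11)^2 + (-(x01 + x10))^2 + x22^2 \<le> 2*(x00^2+x01^2+x02^2+x10^2+x11^2+x12^2+x20^2+x21^2+x22^2)"
proof -
  have "2*(x00^2+x01^2+x02^2+x10^2+x11^2+x12^2+x20^2+x21^2+x22^2) - ((x00 - x11)^2 + (-(x01 + x10))^2 + x22^2)
    = (x00+x11)^2 + (x01-x10)^2 + x22^2 + 2*(x02^2+x12^2+x20^2+x21^2)"
    by (simp add: power2_eq_square algebra_simps)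
  moreover have "(x00+x11)^2 + (x01-x10)^2 + x22^2 + 2*(x02^2+x12^2+x20^2+x21^2) \<ge> 0" by simp
  ultimately show ?thesis by linarith
qed

lemma core:
  fixes a a' b b' c c' :: "real vec"
  assumes na: "a$0^2+a$1^2+a$2^2 = 1" and na': "a'$0^2+a'$1^2+a'$2^2 = 1"
    and nb: "b$0^2+b$1^2+b$2^2 = 1" and nb': "b'$0^2+b'$1^2+b'$2^2 = 1"
    and nc: "c$0^2+c$1^2+c$2^2 = 1" and nc': "c'$0^2+c'$1^2+c'$2^2 = 1"
  shows "\<bar>comb zp a a' b b' c c' + comb rp a a' b b' c c'\<bar> \<le> 4 * sqrt 2"
proof -
  define X where "X i k = a$i*(c$k+c'$k) + a'$i*(c$k-c'$k)" for i k
  define Y where "Y i k = a$i*(c$k-c'$k) - a'$i*(c$k+c'$k)" for i k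
  define v0 where "v0 = X 0 0 - X 1 1"
  define v1 where "v1 = -(X 0 1 + X 1 0)"
  define v2 where "v2 = X 2 2"
  define w0 where "w0 = Y 0 0 - Y 1 1"
  define w1 where "w1 = -(Y 0 1 + Y 1 0)"
  define w2 where "w2 = Y 2 2"
  have VV: "comb zp a a' b b' c c' + comb rp a a' b b' c c' = (b$0*v0+b$1*v1+b$2*v2) + (b'$0*w0+b'$1*w1+b'$2*w2)"
    by (simp add: comb_def zp_def rp_def X_def Y_def v0_def v1_def v2_def w0_def w1_def w2_def algebra_simps)
  define SX where "SX = X 0 0^2+X 0 1^2+X 0 2^2+X 1 0^2+X 1 1^2+X 1 2^2+X 2 0^2+X 2 1^2+X 2 2^2"
  define SY where "SY = Y 0 0^2+Y 0 1^2+Y 0 2^2+Y 1 0^2+Y 1 1^2+Y 1 2^2+Y 2 0^2+Y 2 1^2+Y 2 2^2"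
  have e: "X i k^2 + Y i k^2 = 2*(a$i^2 + a'$i^2)*(c$k^2 + c'$k^2)" for i k
    unfolding X_def Y_def by (simp add: power2_eq_square algebra_simps)
  have "SX + SY = (X 0 0^2 + Y 0 0^2) + (X 0 1^2 + Y 0 1^2) + (X 0 2^2 + Y 0 2^2)
     + (X 1 0^2 + Y 1 0^2) + (X 1 1^2 + Y 1 1^2) + (X 1 2^2 + Y 1 2^2)
     + (X 2 0^2 + Y 2 0^2) + (X 2 1^2 + Y 2 1^2) + (X 2 2^2 + Y 2 2^2)"
    unfolding SX_def SY_def by simp
  also have "\<dots> = 2*((a$0^2+a$1^2+a$2^2)+(a'$0^2+a'$1^2+a'$2^2))*((c$0^2+c$1^2+c$2^2)+(c'$0^2+c'$1^2+c'$2^2))"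
    unfolding e by (simp add: algebra_simps)
  finally have "SX + SY = 2*((a$0^2+a$1^2+a$2^2)+(a'$0^2+a'$1^2+a'$2^2))*((c$0^2+c$1^2+c$2^2)+(c'$0^2+c'$1^2+c'$2^2))" .
  then have SXY: "SX + SY = 8" using na na' nc nc' by simp
  have hv: "v0^2+v1^2+v2^2 \<le> 2*SX" unfolding v0_def v1_def v2_def SX_def by (rule L_ineq)
  have hw: "w0^2+w1^2+w2^2 \<le> 2*SY" unfolding w0_def w1_def w2_def SY_def by (rule L_ineq)
  define nv where "nv = sqrt (v0^2+v1^2+v2^2)"
  define nw where "nw = sqrt (w0^2+w1^2+w2^2)"
  have "\<bar>b$0*v0+b$1*v1+b$2*v2\<bar> \<le> nv" unfolding nv_def by (rule cs_ineq[OF nb])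
  moreover have "\<bar>b'$0*w0+b'$1*w1+b'$2*w2\<bar> \<le> nw" unfolding nw_def by (rule cs_ineq[OF nb'])
  moreover have "nv + nw \<le> 4 * sqrt 2"
  proof -
    have p: "nv \<ge> 0" "nw \<ge> 0" by (simp_all add: nv_def nw_def)
    have s: "nv^2 + nw^2 \<le> 16" using hv hw SXY by (simp add: nv_def nw_def add_nonneg_nonneg)
    have "(nv + nw)^2 \<le> 2*(nv^2+nw^2)"
      using sum_squares_ge_zero[of "nv - nw" 0] by (simp add: power2_eq_square algebra_simps)
    also have "\<dots> \<le> (4 * sqrt 2)^2" using s by (simp add: power_mult_distrib)
    finally have "(nv + nw)^2 \<le> (4 * sqrt 2)^2" .
    then show ?thesis by (rule power2_le_imp_le) simp
  qed
  ultimately show ?thesis unfolding VV by linarith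
qed

lemma unit3_sq: "unit3 a \<Longrightarrow> a$0^2+a$1^2+a$2^2 = 1"
proof -
  assume "unit3 a"
  then have d: "dim_vec a = 3" and s: "a \<bullet> a = 1" by (auto simp: unit3_def)
  from s have "(\<Sum>i<3. a$i * a$i) = 1" using d by (simp add: scalar_prod_def atLeast0LessThan)
  then show ?thesis by (simp add: lessThan_Suc eval_nat_numeral power2_eq_square add_ac)
qed

lemma val_eq: "cmod (mtrace (svetlichny a a' b b' c c' * rho_chi p)) = sqrt 2 / 2 * \<bar>p\<bar> * \<bar>comb zp a a' b b' c c' + comb rp a a' b b' c c'\<bar>"
  by (simp only: tr_S norm_of_real) (simp add: abs_mult)

definition wv :: "real \<Rightarrow> real \<Rightarrow> real \<Rightarrow> real vec" where
  "wv x y z = vec 3 (\<lambda>i. if i = 0 then x else if i = 1 then y else z)"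

lemma wv_idx[simp]: "wv x y z $ 0 = x" "wv x y z $ 1 = y" "wv x y z $ 2 = z"
  by (simp_all add: wv_def)

lemma wv_unit: "x^2+y^2+z^2 = 1 \<Longrightarrow> unit3 (wv x y z)"
  by (simp add: unit3_def wv_def scalar_prod_def atLeast0LessThan lessThan_Suc eval_nat_numeral power2_eq_square add_ac)

lemma witness: "4 * p \<in> svet_values (rho_chi p)" if "0 \<le> p"
proof -
  let ?s = "sqrt 2 / 2"
  have s2: "?s^2 = 1/2" by (simp add: power_divide)
  have u: "unit3 (wv 1 0 0)" "unit3 (wv 0 1 0)" "unit3 (wv ?s (- ?s) 0)" "unit3 (wv ?s ?s 0)"
    by (rule wv_unit; simp add: s2)+
  have "comb zp (wv 1 0 0) (wv 0 1 0) (wv ?s (- ?s) 0) (wv ?s ?s 0) (wv 1 0 0) (wv 0 1 0)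
      + comb rp (wv 1 0 0) (wv 0 1 0) (wv ?s (- ?s) 0) (wv ?s ?s 0) (wv 1 0 0) (wv 0 1 0) = 4 * sqrt 2"
    unfolding comb_def zp_def rp_def wv_idx by simp
  then have "cmod (mtrace (svetlichny (wv 1 0 0) (wv 0 1 0) (wv ?s (- ?s) 0) (wv ?s ?s 0) (wv 1 0 0) (wv 0 1 0) * rho_chi p)) = 4 * p"
    using that by (simp add: val_eq)
  then show ?thesis unfolding svet_values_def using u by (blast intro: sym)
qed

lemma upper: "v \<in> svet_values (rho_chi p) \<Longrightarrow> 0 \<le> p \<Longrightarrow> v \<le> 4 * p"
proof -
  assume v: "v \<in> svet_values (rho_chi p)" and p: "0 \<le> p"
  then obtain a a' b b' c c' where u: "unit3 a" "unit3 a'" "unit3 b" "unit3 b'" "unit3 c" "unit3 c'"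
    and ve: "v = cmod (mtrace (svetlichny a a' b b' c c' * rho_chi p))"
    unfolding svet_values_def by blast
  have "\<bar>comb zp a a' b b' c c' + comb rp a a' b b' c c'\<bar> \<le> 4 * sqrt 2"
    by (rule core; rule unit3_sq, fact)
  then have "sqrt 2 / 2 * p * \<bar>comb zp a a' b b' c c' + comb rp a a' b b' c c'\<bar> \<le> sqrt 2 / 2 * p * (4 * sqrt 2)"
    using p by (intro mult_left_mono) auto
  also have "\<dots> = 4 * p" by simp
  finally show ?thesis using ve p by (simp add: val_eq)
qed

theorem mainTheorem2:
  fixes p :: real
  assumes "0 \<le> p" and "p \<le> 1"
  shows "singular_values (corr_mat (rho_chi p)) [p, p, sqrt 2 / 2 * p]
       \<and> (4 * p \<in> svet_values (rho_chi p) \<and> (\<forall>v \<in> svet_values (rho_chi p). v \<le> 4 * p))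
       \<and> \<not> (\<exists>v \<in> svet_values (rho_chi p). v > 4)"
proof -
  have u: "\<forall>v \<in> svet_values (rho_chi p). v \<le> 4 * p" using upper assms(1) by blast
  have n: "\<not> (\<exists>v \<in> svet_values (rho_chi p). v > 4)"
  proof
    assume "\<exists>v \<in> svet_values (rho_chi p). v > 4"
    then obtain v where "v \<in> svet_values (rho_chi p)" "v > 4" by blast
    with u assms(2) show False by force
  qed
  show ?thesis using sv[OF assms(1)] witness[OF assms(1)] u n by blast
qed

end
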